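(* Let $w:[0,1]\to[0,1]$ be continuous and strictly increasing with $w(0)=0$ and $w(1)=1$. Suppose that for all $0\le a_1<c_1<b<c_2<a_2\le 1$ satisfying $(a_2-b)(b-c_1)=(b-a_1)(c_2-b)$ we have $$[w(a_2)-w(b)]\,[w(b)-w(c_1)]=[w(b)-w(a_1)]\,[w(c_2)-w(b)].$$ Then $w(p)=p$ for all $p\in[0,1]$. *)

theory Defs
  imports "HOL-Analysis.Analysis"
begin

end

theory Submission
  imports Defs
begin

lemma max_principle:
  fixes g :: "real \<Rightarrow> real"
  assumes cont: "continuous_on {0..1} g"
    and g0: "g 0 = 0" and g1: "g 1 = 0"
    and mid: "\<And>c e. 0 < e \<Longrightarrow> 0 \<le> c - 3*e \<Longrightarrow> c + 3*e \<le> 1 \<Longrightarrow>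
               g (c + e) + g (c - e) = 2 * g c"
  shows "\<forall>x\<in>{0..1}. g x \<le> 0"
proof -
  obtain xm where xm: "xm \<in> {0..1}" "\<And>y. y \<in> {0..1} \<Longrightarrow> g y \<le> g xm"
    using continuous_attains_sup[of "{0..1::real}" g] cont by auto
  define M where "M = g xm"
  define S where "S = {x \<in> {0..1::real}. g x = M}"
  have cS: "closed S" unfolding S_def
    by (rule continuous_closed_preimage_constant[OF cont]) auto
  have neS: "S \<noteq> {}" using xm unfolding S_def M_def by auto
  have bS: "bdd_below S" unfolding S_def by (rule bdd_belowI[of _ 0]) auto
  define x0 where "x0 = Inf S"
  have x0S: "x0 \<in> S" unfolding x0_def by (rule closed_contains_Inf[OF neS bS cS])
  have x0le: "\<And>y. y \<in> S \<Longrightarrow> x0 \<le> y" unfolding x0_def by (rule cInf_lower[OF _ bS])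
  have "M \<le> 0"
  proof (rule ccontr)
    assume "\<not> M \<le> 0"
    hence Mp: "M > 0" by simp
    from x0S have x01: "x0 \<in> {0..1}" and gx0: "g x0 = M" unfolding S_def by auto
    have "x0 \<noteq> 0" using gx0 g0 Mp by auto
    moreover have "x0 \<noteq> 1" using gx0 g1 Mp by auto
    ultimately have x0i: "0 < x0" "x0 < 1" using x01 by auto
    define e where "e = min x0 (1 - x0) / 3"
    have ep: "e > 0" using x0i unfolding e_def by auto
    have h1: "0 \<le> x0 - 3*e" "x0 + 3*e \<le> 1" unfolding e_def by auto
    have "g (x0 + e) \<le> M" using xm(2)[of "x0+e"] h1 ep unfolding M_def by auto
    moreover have "g (x0 - e) < M"
    proof -
      have inr: "x0 - e \<in> {0..1}" using h1 ep by auto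
      hence "g (x0 - e) \<le> M" using xm(2) unfolding M_def by auto
      moreover have "g (x0 - e) \<noteq> M"
      proof
        assume "g (x0 - e) = M"
        hence "x0 - e \<in> S" using inr unfolding S_def by auto
        hence "x0 \<le> x0 - e" by (rule x0le)
        thus False using ep by simp
      qed
      ultimately show ?thesis by simp
    qed
    ultimately have "g (x0 + e) + g (x0 - e) < 2 * g x0" using gx0 by simp
    thus False using mid[OF ep h1] by simp
  qed
  thus ?thesis using xm(2) unfolding M_def by force
qed

theorem lemma2:
  fixes w :: "real \<Rightarrow> real"
  assumes range: "\<And>p. p \<in> {0..1} \<Longrightarrow> w p \<in> {0..1}"
    and cont: "continuous_on {0..1} w"
    and incr: "strict_mono_on {0..1} w"
    and w0: "w 0 = 0" and w1: "w 1 = 1"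
    and eq: "\<And>a1 c1 b c2 a2. 0 \<le> a1 \<Longrightarrow> a1 < c1 \<Longrightarrow> c1 < b \<Longrightarrow> b < c2 \<Longrightarrow>
               c2 < a2 \<Longrightarrow> a2 \<le> 1 \<Longrightarrow> (a2 - b) * (b - c1) = (b - a1) * (c2 - b) \<Longrightarrow>
               (w a2 - w b) * (w b - w c1) = (w b - w a1) * (w c2 - w b)"
  shows "\<forall>p \<in> {0..1}. w p = p"
proof -
  have midw: "w (c + e) + w (c - e) = 2 * w c"
    if ep: "0 < e" and l: "0 \<le> c - 3*e" and r: "c + 3*e \<le> 1" for c e
  proof -
    define A where "A = w (c - 2*e) - w (c - 3*e)"
    define B where "B = w (c - e) - w (c - 2*e)"
    define C where "C = w c - w (c - e)"
    define D where "D = w (c + e) - w c"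
    define E where "E = w (c + 2*e) - w (c + e)"
    define F where "F = w (c + 3*e) - w (c + 2*e)"
    have mono: "\<And>x y. 0 \<le> x \<Longrightarrow> x < y \<Longrightarrow> y \<le> 1 \<Longrightarrow> w x < w y"
      using incr by (auto intro: strict_mono_onD)
    have Ap: "A > 0" unfolding A_def using mono[of "c-3*e" "c-2*e"] ep l r by auto
    have Bp: "B > 0" unfolding B_def using mono[of "c-2*e" "c-e"] ep l r by auto
    have Cp: "C > 0" unfolding C_def using mono[of "c-e" "c"] ep l r by auto
    have Dp: "D > 0" unfolding D_def using mono[of "c" "c+e"] ep l r by auto
    have e1: "(D + E) * C = (C + B) * D"
      using eq[of "c-2*e" "c-e" c "c+e" "c+2*e"] ep l r
      unfolding B_def C_def D_def E_def by (auto simp: algebra_simps)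
    have e2: "(D + E + F) * C = (C + B + A) * D"
      using eq[of "c-3*e" "c-e" c "c+e" "c+3*e"] ep l r
      unfolding A_def B_def C_def D_def E_def F_def by (auto simp: algebra_simps)
    have e3: "(C + D) * B = (B + A) * C"
      using eq[of "c-3*e" "c-2*e" "c-e" c "c+e"] ep l r
      unfolding A_def B_def C_def D_def by (auto simp: algebra_simps)
    have e4: "(E + F) * D = (D + C) * E"
      using eq[of "c-e" c "c+e" "c+2*e" "c+3*e"] ep l r
      unfolding C_def D_def E_def F_def by (auto simp: algebra_simps)
    have E1: "E * C = B * D" using e1 by (simp add: algebra_simps)
    have E4: "F * D = C * E" using e4 by (simp add: algebra_simps)
    have E3: "D * B = A * C" using e3 by (simp add: algebra_simps)
    have E2: "F * C = A * D" using e2 E1 by (simp add: algebra_simps)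
    have FB: "F = B" using E1 E4 Dp by (metis mult.commute mult_right_cancel less_irrefl)
    have "B * C * C = A * D * C" using E2 FB by simp
    also have "\<dots> = D * B * D" using E3 by (simp add: algebra_simps)
    finally have "B * (C * C) = B * (D * D)" by (simp add: algebra_simps)
    hence "C * C = D * D" using Bp by simp
    hence "C = D" using Cp Dp by (metis abs_of_pos real_sqrt_abs2 power2_eq_square)
    thus ?thesis unfolding C_def D_def by simp
  qed
  have cg: "continuous_on {0..1} (\<lambda>x. w x - x)"
    by (intro continuous_intros cont)
  have cg2: "continuous_on {0..1} (\<lambda>x. x - w x)"
    by (intro continuous_intros cont)
  have le1: "\<forall>x\<in>{0..1}. w x - x \<le> 0"
    by (rule max_principle[OF cg]) (use w0 w1 midw in auto)
  have le2: "\<forall>x\<in>{0..1}. x - w x \<le> 0"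
  proof (rule max_principle[OF cg2])
    fix c e :: real assume "0 < e" "0 \<le> c - 3*e" "c + 3*e \<le> 1"
    from midw[OF this] show "c + e - w (c + e) + (c - e - w (c - e)) = 2 * (c - w c)" by simp
  qed (use w0 w1 in auto)
  show ?thesis using le1 le2 by force
qed

end
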